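(* Let $s$ be a Lucasian GNS on a ring $D$ and let $\mathcal F$ be a set of positive integers stable under taking divisors. Suppose that for all positive integers $a,b$ with $\ell=\operatorname{lcm}(a,b)\in\mathcal F$ one has $s(\ell)\equiv \frac{s(a)s(b)}{s(g)}\bmod s(a)s(b)$, where $g=\gcd(a,b)$. Then $s$ is $\mathcal F$-Green.
   Context: A GNS over $D$ is $s\colon\mathbf N\to D$ with $s(0)=0$, $s(n)$ a non-zero-divisor for $n>0$, and $s(n-k)\mid s(n)-s(k)$ for $n>k>0$. It is Lucasian if $s(a+b)\equiv s(a)+s(b)\bmod s(a)s(b)$. It is $\mathcal F$-Green if for all $m\in\mathcal F$ and all $a,b\mid m$, with $g=\gcd(a,b)$, $\ell=\operatorname{lcm}(a,b)$, one has $s(m)\equiv\frac m\ell\frac{s(a)s(b)}{s(g)}\bmod s(a)s(b)$ (the quotient $s(a)s(b)/s(g)$ being an element of $D$). *)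

theory Defs
  imports Main
begin

definition non_zero_divisor :: "'a::comm_ring_1 \<Rightarrow> bool" where
  "non_zero_divisor x \<longleftrightarrow> (\<forall>y. x * y = 0 \<longrightarrow> y = 0)"

definition ring_cong :: "'a::comm_ring_1 \<Rightarrow> 'a \<Rightarrow> 'a \<Rightarrow> bool" where
  "ring_cong x y m \<longleftrightarrow> m dvd (x - y)"

definition GNS :: "(nat \<Rightarrow> 'a::comm_ring_1) \<Rightarrow> bool" where
  "GNS s \<longleftrightarrow> s 0 = 0 \<and> (\<forall>n>0. non_zero_divisor (s n))
     \<and> (\<forall>n k. 0 < k \<and> k < n \<longrightarrow> s (n - k) dvd (s n - s k))"

definition Lucasian :: "(nat \<Rightarrow> 'a::comm_ring_1) \<Rightarrow> bool" where
  "Lucasian s \<longleftrightarrow> (\<forall>a b. ring_cong (s (a + b)) (s a + s b) (s a * s b))"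

text \<open>The quotient s(a)s(b)/s(g) in D (well defined since s(g) is a non-zero-divisor).\<close>
definition gns_quot :: "(nat \<Rightarrow> 'a::comm_ring_1) \<Rightarrow> nat \<Rightarrow> nat \<Rightarrow> 'a" where
  "gns_quot s a b = (THE q. s (gcd a b) * q = s a * s b)"

definition F_Green :: "nat set \<Rightarrow> (nat \<Rightarrow> 'a::comm_ring_1) \<Rightarrow> bool" where
  "F_Green F s \<longleftrightarrow> (\<forall>m\<in>F. \<forall>a b. a dvd m \<and> b dvd m \<longrightarrow>
     ring_cong (s m) (of_nat (m div lcm a b) * gns_quot s a b) (s a * s b))"

end

theory Submission
  imports Defs
begin

lemma luc_dvd:
  fixes s :: "nat \<Rightarrow> 'a::comm_ring_1"
  assumes L: "Lucasian s" and s0: "s 0 = 0"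
  shows "s k dvd s (j * k)"
proof (induction j)
  case 0 then show ?case using s0 by simp
next
  case (Suc j)
  have "s (j*k) * s k dvd s (j*k + k) - (s (j*k) + s k)"
    using L unfolding Lucasian_def ring_cong_def by blast
  then have "s k dvd s (j*k + k) - (s (j*k) + s k)"
    using dvd_mult_right by blast
  moreover have "s k dvd s (j*k) + s k" using Suc by simp
  ultimately have "s k dvd s (j*k + k)"
    by (metis diff_add_cancel dvd_add)
  then show ?case by (simp add: add.commute)
qed

lemma luc_mult:
  fixes s :: "nat \<Rightarrow> 'a::comm_ring_1"
  assumes L: "Lucasian s" and s0: "s 0 = 0"
  shows "s l * s l dvd s (j * l) - of_nat j * s l"
proof (induction j)
  case 0 then show ?case using s0 by simp
next
  case (Suc j)
  have "s (j*l) * s l dvd s (j*l + l) - (s (j*l) + s l)"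
    using L unfolding Lucasian_def ring_cong_def by blast
  moreover have "s l * s l dvd s (j*l) * s l"
    using luc_dvd[OF L s0, of l j] by (simp add: mult_dvd_mono)
  ultimately have "s l * s l dvd s (j*l + l) - (s (j*l) + s l)"
    using dvd_trans by blast
  then have "s l * s l dvd (s (j*l + l) - (s (j*l) + s l)) + (s (j * l) - of_nat j * s l)"
    using Suc dvd_add by blast
  moreover have "(s (j*l + l) - (s (j*l) + s l)) + (s (j * l) - of_nat j * s l)
      = s (Suc j * l) - of_nat (Suc j) * s l"
    by (simp add: algebra_simps)
  ultimately show ?case by simp
qed

theorem corollary5p12:
  fixes s :: "nat \<Rightarrow> 'a::comm_ring_1" and F :: "nat set"
  assumes "GNS s" and "Lucasian s"
    and "\<forall>m\<in>F. 0 < m"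
    and "\<forall>m\<in>F. \<forall>d. 0 < d \<and> d dvd m \<longrightarrow> d \<in> F"
    and "\<forall>a b. 0 < a \<and> 0 < b \<and> lcm a b \<in> F \<longrightarrow>
           ring_cong (s (lcm a b)) (gns_quot s a b) (s a * s b)"
  shows "F_Green F s"
  unfolding F_Green_def
proof (intro ballI allI impI)
  fix m a b assume mF: "m \<in> F" and ab: "a dvd m \<and> b dvd m"
  have s0: "s 0 = 0" using assms(1) unfolding GNS_def by simp
  have L: "Lucasian s" by fact
  have m0: "0 < m" using assms(3) mF by blast
  have a0: "0 < a" and b0: "0 < b" using ab m0 by (auto intro: Nat.gr0I)
  define l where "l = lcm a b"
  have l0: "0 < l" using a0 b0 l_def by (simp add: lcm_pos_nat)
  have ldm: "l dvd m" using ab l_def by simp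
  have lF: "l \<in> F" using assms(4) mF l0 ldm by blast
  obtain j where mj: "m = j * l" using ldm by (metis dvd_def mult.commute)
  have jdiv: "m div lcm a b = j" using mj l0 l_def by simp
  have cong1: "s a * s b dvd s l - gns_quot s a b"
    using assms(5) a0 b0 lF l_def unfolding ring_cong_def by blast
  have sal: "s a dvd s l"
    using luc_dvd[OF L s0] by (metis dvd_def dvd_lcm1 l_def mult.commute)
  have sbl: "s b dvd s l"
    using luc_dvd[OF L s0] by (metis dvd_def dvd_lcm2 l_def mult.commute)
  have "s a * s b dvd s l * s l" using sal sbl by (rule mult_dvd_mono)
  then have c2: "s a * s b dvd s m - of_nat j * s l"
    using luc_mult[OF L s0, of l j] mj dvd_trans by blast
  have c3: "s a * s b dvd of_nat j * (s l - gns_quot s a b)"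
    using cong1 by simp
  have "s m - of_nat j * gns_quot s a b
        = (s m - of_nat j * s l) + of_nat j * (s l - gns_quot s a b)"
    by (simp add: algebra_simps)
  then have "s a * s b dvd s m - of_nat j * gns_quot s a b"
    using c2 c3 by (metis dvd_add)
  then show "ring_cong (s m) (of_nat (m div lcm a b) * gns_quot s a b) (s a * s b)"
    unfolding ring_cong_def jdiv .
qed

end
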